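(* Let $q$ be a prime power and $n\ge4$. Then $$\mathbb{E}_q(n,1)=2^{\left\lfloor\log_2\left(\frac{q^{n-1}-1}{q-1}+1\right)\right\rfloor}\le\mathbb{E}_q(n).$$ Moreover, there is an equidistant linear code in $\mathbb{P}_q(n)$ with constant distance $2$ and of size $\mathbb{E}_q(n,1)$ whose nontrivial part is contained in a sunflower $\{V\in\mathbb{G}_q(n,2): W\subset V\}$ for some $W\in\mathbb{G}_q(n,1)$.
   Context: $\mathbb{P}_q(n)$ denotes the set of all subspaces of $\mathbb{F}_q^n$ and $\mathbb{G}_q(n,k)$ the set of $k$-dimensional subspaces. For subspaces $X,Y$ the subspace distance is $d_S(X,Y)=\dim X+\dim Y-2\dim(X\cap Y)$. A linear code in $\mathbb{P}_q(n)$ is a subset $\mathcal{U}\subseteq\mathbb{P}_q(n)$ with $\{0\}\in\mathcal{U}$ for which there exists a map $\boxplus:\mathcal{U}\times\mathcal{U}\to\mathcal{U}$ such that (i) $(\mathcal{U},\boxplus)$ is an abelian group; (ii) its identity element is $\{0\}$; (iii) $X\boxplus X=\{0\}$ for all $X\in\mathcal{U}$; (iv) $d_S(Y_1\boxplus X,Y_2\boxplus X)=d_S(Y_1,Y_2)$ for all $Y_1,Y_2,X\in\mathcal{U}$. Its nontrivial part is $\mathcal{U}\setminus\{\{0\}\}$. It is equidistant with constant distance $r$ if $d_S(X,Y)=r$ for all distinct $X,Y\in\mathcal{U}$. $\mathbb{E}_q(n)$ denotes the maximum size of an equidistant linear code in $\mathbb{P}_q(n)$, and $\mathbb{E}_q(n,d)$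 the maximum size of an equidistant linear code in $\mathbb{P}_q(n)$ with constant distance $2d$. A sunflower is a family of $k$-subspaces any two distinct members of which intersect in the same fixed subspace (its center). *)

theory Defs
  imports "HOL-Analysis.Analysis"
begin

text \<open>The ambient space F_q^n is modelled as 'a^'n with 'a a finite field (so q = CARD('a))
  and n = CARD('n). Subspaces are vec.subspace, dimension is vec.dim.\<close>

definition all_subspaces :: "'a::field itself \<Rightarrow> 'n::finite itself \<Rightarrow> ('a^'n) set set" where
  "all_subspaces _ _ = {X. vec.subspace X}"

definition grass :: "'a::field itself \<Rightarrow> 'n::finite itself \<Rightarrow> nat \<Rightarrow> ('a^'n) set set" where
  "grass _ _ k = {X. vec.subspace X \<and> vec.dim X = k}"

definition subspace_dist :: "('a::field^'n::finite) set \<Rightarrow> ('a^'n) set \<Rightarrow> nat" where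
  "subspace_dist X Y = vec.dim X + vec.dim Y - 2 * vec.dim (X \<inter> Y)"

definition linear_code :: "('a::field^'n::finite) set set \<Rightarrow> bool" where
  "linear_code U \<longleftrightarrow> U \<subseteq> {X. vec.subspace X} \<and> {0} \<in> U \<and>
     (\<exists>pl :: ('a^'n) set \<Rightarrow> ('a^'n) set \<Rightarrow> ('a^'n) set.
        (\<forall>X\<in>U. \<forall>Y\<in>U. pl X Y \<in> U) \<and>
        (\<forall>X\<in>U. \<forall>Y\<in>U. \<forall>Z\<in>U. pl (pl X Y) Z = pl X (pl Y Z)) \<and>
        (\<forall>X\<in>U. \<forall>Y\<in>U. pl X Y = pl Y X) \<and>
        (\<forall>X\<in>U. pl {0} X = X \<and> pl X {0} = X) \<and>
        (\<forall>X\<in>U. \<exists>Y\<in>U. pl X Y = {0}) \<and>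
        (\<forall>X\<in>U. pl X X = {0}) \<and>
        (\<forall>Y1\<in>U. \<forall>Y2\<in>U. \<forall>X\<in>U. subspace_dist (pl Y1 X) (pl Y2 X) = subspace_dist Y1 Y2))"

definition equidistant :: "('a::field^'n::finite) set set \<Rightarrow> nat \<Rightarrow> bool" where
  "equidistant U r \<longleftrightarrow> (\<forall>X\<in>U. \<forall>Y\<in>U. X \<noteq> Y \<longrightarrow> subspace_dist X Y = r)"

definition Eq_max :: "'a::field itself \<Rightarrow> 'n::finite itself \<Rightarrow> nat" where
  "Eq_max _ _ = Max {card U | U :: ('a^'n) set set. linear_code U \<and> (\<exists>r. equidistant U r)}"

definition Eq_dist :: "'a::field itself \<Rightarrow> 'n::finite itself \<Rightarrow> nat \<Rightarrow> nat" where
  "Eq_dist _ _ d = Max {card U | U :: ('a^'n) set set. linear_code U \<and> equidistant U (2 * d)}"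

end

theory Submission
  imports Defs
begin


lemma card_span_indep:
  fixes B :: "('a::{finite,field}^'n::finite) set"
  assumes "vec.independent B"
  shows "card (vec.span B) = CARD('a) ^ card B"
proof -
  have "finite B" by simp
  then show ?thesis using assms
  proof (induction B rule: finite_induct)
    case empty
    then show ?case by simp
  next
    case (insert b B)
    have indB: "vec.independent B" using insert.prems vec.independent_mono by blast
    have bnot: "b \<notin> vec.span B" using insert.prems insert.hyps(2) by (simp add: vec.independent_insert)
    have eq: "vec.span (insert b B) = (\<lambda>(c,y). c *s b + y) ` (UNIV \<times> vec.span B)"
    proof
      show "vec.span (insert b B) \<subseteq> (\<lambda>(c,y). c *s b + y) ` (UNIV \<times> vec.span B)"
      proof
        fix x assume "x \<in> vec.span (insert b B)"
        then obtain k where "x - k *s b \<in> vec.span B" using vec.span_breakdown_eq by blast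
        then show "x \<in> (\<lambda>(c,y). c *s b + y) ` (UNIV \<times> vec.span B)"
          by (intro image_eqI[of _ _ "(k, x - k *s b)"]) auto
      qed
    next
      show "(\<lambda>(c,y). c *s b + y) ` (UNIV \<times> vec.span B) \<subseteq> vec.span (insert b B)"
      proof (clarsimp)
        fix c y assume "y \<in> vec.span B"
        have "b \<in> vec.span (insert b B)" by (simp add: vec.span_base)
        moreover have "y \<in> vec.span (insert b B)"
          using \<open>y \<in> vec.span B\<close> vec.span_mono[of B "insert b B"] by blast
        ultimately show "c *s b + y \<in> vec.span (insert b B)"
          by (simp add: vec.span_add vec.span_scale)
      qed
    qed
    have inj: "inj_on (\<lambda>(c,y). c *s b + y) (UNIV \<times> vec.span B)"
    proof (rule inj_onI, clarsimp)
      fix c y c' y'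
      assume y: "y \<in> vec.span B" and y': "y' \<in> vec.span B" and e: "c *s b + y = c' *s b + y'"
      have "(c - c') *s b = y' - y" using e by (simp add: algebra_simps vector_sub_rdistrib)
      hence "(c - c') *s b \<in> vec.span B" using y y' vec.span_diff by metis
      show "c = c' \<and> y = y'"
      proof (cases "c = c'")
        case True then show ?thesis using e by simp
      next
        case False
        hence mem: "inverse (c - c') *s ((c - c') *s b) \<in> vec.span B"
          using \<open>(c - c') *s b \<in> vec.span B\<close> vec.span_scale by blast
        have eqb: "inverse (c - c') *s ((c - c') *s b) = b"
        proof -
          have "c - c' \<noteq> 0" using False by simp
          then have "inverse (c - c') * (c - c') = 1" by (rule left_inverse)
          then show ?thesis by (simp only: vec.scale_scale vec.scale_one)
        qed
        from mem have "b \<in> vec.span B" by (simp only: eqb)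
        then show ?thesis using bnot by blast
      qed
    qed
    have "card (vec.span (insert b B)) = card ((UNIV :: 'a set) \<times> vec.span B)"
      using eq inj card_image by metis
    also have "\<dots> = CARD('a) * card (vec.span B)" by (simp add: card_cartesian_product)
    finally show ?case using insert indB by simp
  qed
qed

lemma card_subspace:
  fixes X :: "('a::{finite,field}^'n::finite) set"
  assumes "vec.subspace X"
  shows "card X = CARD('a) ^ vec.dim X"
proof -
  obtain B where "B \<subseteq> X" "vec.independent B" "X \<subseteq> vec.span B" "card B = vec.dim X"
    using vec.basis_exists by blast
  moreover have "vec.span B = X"
    using calculation assms vec.span_minimal by blast
  ultimately show ?thesis using card_span_indep by metis
qed



lemma q_ge2: "CARD('a::{finite,field}) \<ge> 2"
proof -
  have "card {0::'a, 1} = 2" by simp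
  moreover have "card {0::'a, 1} \<le> CARD('a)" by (rule card_mono) auto
  ultimately show ?thesis by simp
qed

lemma dim_eq_card_iff:
  fixes X Y :: "('a::{finite,field}^'n::finite) set"
  assumes "vec.subspace X" "vec.subspace Y"
  shows "vec.dim X = vec.dim Y \<longleftrightarrow> card X = card Y"
  using card_subspace[OF assms(1)] card_subspace[OF assms(2)] q_ge2[where 'a='a]
  by (simp add: power_inject_exp)

lemma card_dim_k:
  fixes X :: "('a::{finite,field}^'n::finite) set"
  assumes "vec.subspace X" "vec.dim X = k"
  shows "card X = CARD('a) ^ k"
  using card_subspace[OF assms(1)] assms(2) by simp

lemma sub_eq_dim:
  fixes X Y :: "('a::{finite,field}^'n::finite) set"
  assumes "vec.subspace X" "vec.subspace Y" "Y \<subseteq> X" "vec.dim Y \<ge> vec.dim X"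
  shows "Y = X"
proof -
  have "vec.dim Y = vec.dim X" using vec.dim_subset[OF assms(3)] assms(4) by simp
  hence "card Y = card X" using dim_eq_card_iff assms by metis
  thus ?thesis using card_subset_eq[OF _ assms(3)] by simp
qed

lemma dim_zero_iff:
  fixes Y :: "('a::{finite,field}^'n::finite) set"
  assumes "vec.subspace Y"
  shows "vec.dim Y = 0 \<longleftrightarrow> Y = {0}"
proof
  assume "vec.dim Y = 0"
  hence "card Y = 1" using card_subspace[OF assms] by simp
  moreover have "0 \<in> Y" using assms vec.subspace_0 by blast
  ultimately show "Y = {0}" by (metis card_1_singletonE singletonD)
next
  assume "Y = {0}"
  hence "card Y = 1" by simp
  thus "vec.dim Y = 0" using card_subspace[OF assms] q_ge2[where 'a='a]
    by (simp add: nat_power_eq_Suc_0_iff)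
qed

lemma sub_of_line:
  fixes X Y :: "('a::{finite,field}^'n::finite) set"
  assumes "vec.subspace X" "vec.subspace Y" "Y \<subseteq> X" "vec.dim X = 1"
  shows "Y = {0} \<or> Y = X"
proof -
  have "vec.dim Y \<le> 1" using vec.dim_subset[OF assms(3)] assms(4) by simp
  then consider "vec.dim Y = 0" | "vec.dim Y = 1" by linarith
  thus ?thesis
  proof cases
    case 1 thus ?thesis using dim_zero_iff assms(2) by blast
  next
    case 2 thus ?thesis using sub_eq_dim[OF assms(1-3)] assms(4) by simp
  qed
qed

lemma proper_sub_plane:
  fixes X Y :: "('a::{finite,field}^'n::finite) set"
  assumes "vec.subspace X" "vec.subspace Y" "Y \<subseteq> X" "vec.dim X = 2" "Y \<noteq> X"
  shows "vec.dim Y \<le> 1"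
proof (rule ccontr)
  assume "\<not> vec.dim Y \<le> 1"
  hence "vec.dim Y \<ge> vec.dim X" using assms(4) by simp
  thus False using sub_eq_dim[OF assms(1-3)] assms(5) by simp
qed

lemma dist_zero_left:
  fixes X :: "('a::{finite,field}^'n::finite) set"
  assumes "vec.subspace X"
  shows "subspace_dist {0} X = vec.dim X" "subspace_dist X {0} = vec.dim X"
proof -
  have "{0} \<inter> X = {0}" "X \<inter> {0} = {0}" using assms vec.subspace_0 by auto
  moreover have "vec.dim ({0} :: ('a^'n) set) = 0"
    using dim_zero_iff[of "{0::'a^'n}"] vec.subspace_single_0 by blast
  ultimately show "subspace_dist {0} X = vec.dim X" "subspace_dist X {0} = vec.dim X"
    by (simp_all add: subspace_dist_def)
qed

lemma disj_count:
  fixes G :: "'b set set"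
  assumes "finite T" "\<forall>V\<in>G. L \<subseteq> V \<and> V \<subseteq> T \<and> card V = a" "card L = b" "L \<subseteq> T"
    "\<forall>V\<in>G. \<forall>V'\<in>G. V \<noteq> V' \<longrightarrow> V \<inter> V' = L"
  shows "card G * (a - b) \<le> card T - b"
proof -
  have "G \<subseteq> Pow T" using assms(2) by auto
  hence fG: "finite G" using assms(1) finite_subset by blast
  have "card (\<Union>V\<in>G. V - L) = (\<Sum>V\<in>G. card (V - L))"
  proof (rule card_UN_disjoint)
    show "finite G" by (rule fG)
    show "\<forall>V\<in>G. finite (V - L)" using assms(1,2) by (meson finite_Diff finite_subset)
    show "\<forall>V\<in>G. \<forall>V'\<in>G. V \<noteq> V' \<longrightarrow> (V - L) \<inter> (V' - L) = {}"
      using assms(5) by blast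
  qed
  also have "\<dots> = (\<Sum>V\<in>G. a - b)"
  proof (rule sum.cong)
    fix V assume "V \<in> G"
    hence "L \<subseteq> V" "card V = a" using assms by auto
    moreover have "finite L" using finite_subset[OF assms(4,1)] .
    ultimately show "card (V - L) = a - b" using assms(3) by (simp add: card_Diff_subset)
  qed simp
  also have "\<dots> = card G * (a - b)" by simp
  finally have e: "card (\<Union>V\<in>G. V - L) = card G * (a - b)" .
  have "(\<Union>V\<in>G. V - L) \<subseteq> T - L" using assms by auto
  hence "card (\<Union>V\<in>G. V - L) \<le> card (T - L)" using assms(1) by (intro card_mono) simp_all
  also have "\<dots> = card T - b" using assms(3,4) card_Diff_subset[OF finite_subset[OF assms(4,1)] assms(4)] by simp
  finally show ?thesis using e by simp
qed



lemma ar1: fixes q x :: nat assumes "q \<ge> 2" "x * (q - 1) \<le> q^2 - 1" shows "x \<le> q + 1"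
proof -
  have "q^2 - 1 = (q + 1) * (q - 1)" using assms(1)
    by (simp add: power2_eq_square algebra_simps diff_mult_distrib diff_mult_distrib2)
  hence "x * (q - 1) \<le> (q + 1) * (q - 1)" using assms(2) by simp
  moreover have "q - 1 > 0" using assms(1) by simp
  ultimately show ?thesis by (rule mult_right_le_imp_le)
qed

lemma ar2: fixes q x :: nat assumes "q \<ge> 2" "x * (q^2 - q) \<le> q^3 - q" shows "x \<le> q + 1"
proof -
  have "q^3 - q = (q + 1) * (q^2 - q)" using assms(1)
    by (simp add: power2_eq_square power3_eq_cube algebra_simps diff_mult_distrib diff_mult_distrib2)
  hence "x * (q^2 - q) \<le> (q + 1) * (q^2 - q)" using assms(2) by simp
  moreover have "q^2 - q > 0" using assms(1) by (simp add: power2_eq_square)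
  ultimately show ?thesis by (rule mult_right_le_imp_le)
qed



lemma planes_bound:
  fixes F :: "('a::{finite,field}^'n::finite) set set"
  assumes FP: "\<forall>X\<in>F. vec.subspace X \<and> vec.dim X = 2"
    and FI: "\<forall>X\<in>F. \<forall>Y\<in>F. X \<noteq> Y \<longrightarrow> vec.dim (X \<inter> Y) = 1"
  shows "card F \<le> 1 + CARD('a) + CARD('a)^2
     \<or> card F * (CARD('a)^2 - CARD('a)) \<le> CARD('a)^CARD('n) - CARD('a)"
proof (cases "card F \<le> 1")
  case True then show ?thesis by simp
next
  case False
  define q where "q = CARD('a)"
  have q2: "q \<ge> 2" unfolding q_def by (rule q_ge2)
  have fF: "finite F" by simp
  obtain A B where AB: "A \<in> F" "B \<in> F" "A \<noteq> B"
    using False card_le_Suc0_iff_eq[OF fF] by auto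
  have sA: "vec.subspace A" "vec.dim A = 2" and sB: "vec.subspace B" "vec.dim B = 2"
    using FP AB by auto
  define L where "L = A \<inter> B"
  have sL: "vec.subspace L" unfolding L_def using sA sB vec.subspace_inter by blast
  have dL: "vec.dim L = 1" unfolding L_def using FI AB by auto
  have LA: "L \<subseteq> A" and LB: "L \<subseteq> B" unfolding L_def by auto
  have cL: "card L = q" using card_dim_k[OF sL dL] q_def by simp
  have cplane: "\<And>V. V \<in> F \<Longrightarrow> card V = q^2" using FP card_dim_k q_def by blast
  have meet_eq: "\<And>V V' l. V \<in> F \<Longrightarrow> V' \<in> F \<Longrightarrow> V \<noteq> V' \<Longrightarrow> vec.subspace l
      \<Longrightarrow> vec.dim l = 1 \<Longrightarrow> l \<subseteq> V \<Longrightarrow> l \<subseteq> V' \<Longrightarrow> V \<inter> V' = l"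
  proof -
    fix V V' l assume h: "V \<in> F" "V' \<in> F" "V \<noteq> V'" "vec.subspace l" "vec.dim l = 1"
      "l \<subseteq> V" "l \<subseteq> V'"
    have s: "vec.subspace (V \<inter> V')" using h FP vec.subspace_inter by blast
    have "vec.dim (V \<inter> V') = 1" using FI h by blast
    thus "V \<inter> V' = l" using sub_eq_dim[OF s h(4)] h by simp
  qed
  show ?thesis
  proof (cases "\<forall>C\<in>F. L \<subseteq> C")
    case True
    have "card F * (q^2 - q) \<le> card (UNIV :: ('a^'n) set) - q"
    proof (rule disj_count)
      show "finite (UNIV :: ('a^'n) set)" by simp
      show "\<forall>V\<in>F. L \<subseteq> V \<and> V \<subseteq> UNIV \<and> card V = q^2" using True cplane by blast
      show "card L = q" by (rule cL)
      show "L \<subseteq> UNIV" by simp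
      show "\<forall>V\<in>F. \<forall>V'\<in>F. V \<noteq> V' \<longrightarrow> V \<inter> V' = L"
        using meet_eq[OF _ _ _ sL dL] True by blast
    qed
    then show ?thesis unfolding q_def by simp
  next
    case False
    then obtain C where C: "C \<in> F" "\<not> L \<subseteq> C" by blast
    define S where "S = {x + y |x y. x \<in> A \<and> y \<in> B}"
    have sS: "vec.subspace S" unfolding S_def using vec.subspace_sums[OF sA(1) sB(1)] .
    have dS: "vec.dim S = 3" using vec.dim_sums_Int[OF sA(1) sB(1)] sA sB dL
      unfolding S_def L_def by simp
    have AS: "A \<subseteq> S"
    proof
      fix x assume "x \<in> A"
      moreover have "(0::'a^'n) \<in> B" using sB vec.subspace_0 by blast
      ultimately show "x \<in> S" unfolding S_def by force
    qed
    have X: "\<forall>D\<in>F. \<not> L \<subseteq> D \<longrightarrow> D \<subseteq> S"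
    proof (intro ballI impI)
      fix D assume D: "D \<in> F" "\<not> L \<subseteq> D"
      have sD: "vec.subspace D" "vec.dim D = 2" using FP D by auto
      have DA: "D \<noteq> A" and DB: "D \<noteq> B" using D LA LB by auto
      define l1 where "l1 = D \<inter> A"
      define l2 where "l2 = D \<inter> B"
      have s1: "vec.subspace l1" unfolding l1_def using sD sA vec.subspace_inter by blast
      have s2: "vec.subspace l2" unfolding l2_def using sD sB vec.subspace_inter by blast
      have d1: "vec.dim l1 = 1" unfolding l1_def using FI D AB DA by blast
      have d2: "vec.dim l2 = 1" unfolding l2_def using FI D AB DB by blast
      have ne: "l1 \<noteq> l2"
      proof
        assume e: "l1 = l2"
        hence "l1 \<subseteq> L" unfolding L_def l1_def l2_def by blast
        hence "l1 = L" using sub_eq_dim[OF sL s1] d1 dL by simp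
        thus False using D(2) unfolding l1_def by blast
      qed
      have i0: "l1 \<inter> l2 = {0}"
      proof -
        have "l1 \<inter> l2 = {0} \<or> l1 \<inter> l2 = l1"
          using sub_of_line[OF s1 vec.subspace_inter[OF s1 s2] _ d1] by blast
        moreover have "l1 \<inter> l2 \<noteq> l1"
        proof
          assume "l1 \<inter> l2 = l1"
          hence "l1 \<subseteq> l2" by blast
          hence "l1 = l2" using sub_eq_dim[OF s2 s1] d1 d2 by simp
          thus False using ne by simp
        qed
        ultimately show ?thesis by blast
      qed
      define M where "M = {x + y |x y. x \<in> l1 \<and> y \<in> l2}"
      have sM: "vec.subspace M" unfolding M_def using vec.subspace_sums[OF s1 s2] .
      have "vec.dim ({0} :: ('a^'n) set) = 0"
        using dim_zero_iff[of "{0::'a^'n}"] vec.subspace_single_0 by blast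
      hence dM: "vec.dim M = 2" using vec.dim_sums_Int[OF s1 s2] d1 d2 i0 unfolding M_def by simp
      have MD: "M \<subseteq> D"
      proof
        fix z assume "z \<in> M"
        then obtain x y where "z = x + y" "x \<in> l1" "y \<in> l2" unfolding M_def by blast
        thus "z \<in> D" using sD(1) vec.subspace_add unfolding l1_def l2_def by blast
      qed
      have "M = D" using sub_eq_dim[OF sD(1) sM MD] dM sD by simp
      moreover have "M \<subseteq> S" unfolding M_def S_def l1_def l2_def by blast
      ultimately show "D \<subseteq> S" by simp
    qed
    have allS: "\<forall>D\<in>F. D \<subseteq> S"
    proof (rule ccontr)
      assume "\<not> (\<forall>D\<in>F. D \<subseteq> S)"
      then obtain D where D: "D \<in> F" "\<not> D \<subseteq> S" by blast
      have sD: "vec.subspace D" "vec.dim D = 2" using FP D by auto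
      have LD: "L \<subseteq> D" using X D by blast
      define Z where "Z = D \<inter> S"
      have sZ: "vec.subspace Z" unfolding Z_def using sD sS vec.subspace_inter by blast
      have "Z \<noteq> D" using D unfolding Z_def by blast
      hence "vec.dim Z \<le> 1" using proper_sub_plane[OF sD(1) sZ _ sD(2)] unfolding Z_def by blast
      moreover have LZ: "L \<subseteq> Z" unfolding Z_def using LD LA AS by blast
      ultimately have ZL: "Z = L" using sub_eq_dim[OF sZ sL LZ] dL by simp
      have "D \<noteq> C" using LD C by blast
      hence "vec.dim (D \<inter> C) = 1" using FI D C by blast
      moreover have sDC: "vec.subspace (D \<inter> C)" using sD FP C vec.subspace_inter by blast
      moreover have "D \<inter> C \<subseteq> L" using ZL X C unfolding Z_def by blast
      ultimately have "D \<inter> C = L" using sub_eq_dim[OF sL sDC] dL by simp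
      thus False using C by blast
    qed
    define Lam where "Lam = (\<lambda>V. A \<inter> V) ` (F - {A})"
    have Lprops: "\<forall>l\<in>Lam. vec.subspace l \<and> vec.dim l = 1 \<and> l \<subseteq> A"
    proof
      fix l assume "l \<in> Lam"
      then obtain V where V: "V \<in> F" "V \<noteq> A" "l = A \<inter> V" unfolding Lam_def by blast
      have "vec.subspace V" using FP V by blast
      hence "vec.subspace l" using V(3) sA vec.subspace_inter by blast
      moreover have "vec.dim l = 1" using FI AB(1) V by blast
      ultimately show "vec.subspace l \<and> vec.dim l = 1 \<and> l \<subseteq> A" using V(3) by blast
    qed
    have "card Lam * (q - 1) \<le> card A - 1"
    proof (rule disj_count)
      show "finite A" by simp
      show "\<forall>V\<in>Lam. {0} \<subseteq> V \<and> V \<subseteq> A \<and> card V = q"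
      proof
        fix V assume "V \<in> Lam"
        hence "vec.subspace V" "vec.dim V = 1" "V \<subseteq> A" using Lprops by auto
        thus "{0} \<subseteq> V \<and> V \<subseteq> A \<and> card V = q"
          using card_dim_k[of V 1] vec.subspace_0 q_def by auto
      qed
      show "card {0::'a^'n} = 1" by simp
      show "{0} \<subseteq> A" using sA vec.subspace_0 by blast
      show "\<forall>V\<in>Lam. \<forall>V'\<in>Lam. V \<noteq> V' \<longrightarrow> V \<inter> V' = {0}"
      proof (intro ballI impI)
        fix l l' assume h: "l \<in> Lam" "l' \<in> Lam" "l \<noteq> l'"
        have s: "vec.subspace l" "vec.dim l = 1" "vec.subspace l'" "vec.dim l' = 1"
          using Lprops h by auto
        have "l \<inter> l' = {0} \<or> l \<inter> l' = l"
          using sub_of_line[OF s(1) vec.subspace_inter[OF s(1) s(3)] _ s(2)] by blast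
        moreover have "l \<inter> l' \<noteq> l"
        proof
          assume "l \<inter> l' = l"
          hence "l \<subseteq> l'" by blast
          hence "l = l'" using sub_eq_dim[OF s(3) s(1)] s by simp
          thus False using h by simp
        qed
        ultimately show "l \<inter> l' = {0}" by blast
      qed
    qed
    hence "card Lam * (q - 1) \<le> q^2 - 1" using cplane AB by simp
    hence cLam: "card Lam \<le> q + 1" by (rule ar1[OF q2])
    have cS: "card S = q^3" using card_dim_k[OF sS dS] q_def by simp
    have fib: "\<forall>l\<in>Lam. card {V\<in>F. l \<subseteq> V} \<le> q + 1"
    proof
      fix l assume l: "l \<in> Lam"
      have sl: "vec.subspace l" "vec.dim l = 1" "l \<subseteq> A" using Lprops l by auto
      have "card {V\<in>F. l \<subseteq> V} * (q^2 - q) \<le> card S - q"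
      proof (rule disj_count)
        show "finite S" by simp
        show "\<forall>V\<in>{V\<in>F. l \<subseteq> V}. l \<subseteq> V \<and> V \<subseteq> S \<and> card V = q^2"
        proof
          fix V assume "V \<in> {V\<in>F. l \<subseteq> V}"
          thus "l \<subseteq> V \<and> V \<subseteq> S \<and> card V = q^2" using allS cplane[of V] by simp
        qed
        show "card l = q" using card_dim_k[OF sl(1,2)] q_def by simp
        show "l \<subseteq> S" using sl AS by blast
        show "\<forall>V\<in>{V\<in>F. l \<subseteq> V}. \<forall>V'\<in>{V\<in>F. l \<subseteq> V}. V \<noteq> V' \<longrightarrow> V \<inter> V' = l"
        proof (intro ballI impI)
          fix V V' assume "V \<in> {V\<in>F. l \<subseteq> V}" "V' \<in> {V\<in>F. l \<subseteq> V}" "V \<noteq> V'"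
          thus "V \<inter> V' = l" using meet_eq[OF _ _ _ sl(1,2)] by simp
        qed
      qed
      hence "card {V\<in>F. l \<subseteq> V} * (q^2 - q) \<le> q^3 - q" using cS by simp
      thus "card {V\<in>F. l \<subseteq> V} \<le> q + 1" by (rule ar2[OF q2])
    qed
    have cover: "F \<subseteq> insert A (\<Union>l\<in>Lam. {V\<in>F. l \<subseteq> V} - {A})"
    proof
      fix V assume V: "V \<in> F"
      show "V \<in> insert A (\<Union>l\<in>Lam. {V\<in>F. l \<subseteq> V} - {A})"
      proof (cases "V = A")
        case False
        hence "A \<inter> V \<in> Lam" unfolding Lam_def using V by blast
        thus ?thesis using V False by blast
      qed simp
    qed
    have "card F \<le> card (insert A (\<Union>l\<in>Lam. {V\<in>F. l \<subseteq> V} - {A}))"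
      by (rule card_mono[OF _ cover]) simp
    also have "\<dots> \<le> Suc (card (\<Union>l\<in>Lam. {V\<in>F. l \<subseteq> V} - {A}))"
    proof -
      have "\<And>R :: ('a^'n) set set. card (insert A R) \<le> Suc (card R)"
        by (simp add: card_insert_if)
      thus ?thesis by blast
    qed
    also have "\<dots> \<le> Suc (\<Sum>l\<in>Lam. card ({V\<in>F. l \<subseteq> V} - {A}))"
      using card_UN_le[of Lam "\<lambda>l. {V\<in>F. l \<subseteq> V} - {A}"] by simp
    also have "\<dots> \<le> Suc (\<Sum>l\<in>Lam. q)"
    proof -
      have "\<forall>l\<in>Lam. card ({V\<in>F. l \<subseteq> V} - {A}) \<le> q"
      proof
        fix l assume l: "l \<in> Lam"
        have "A \<in> {V\<in>F. l \<subseteq> V}" using l Lprops AB by blast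
        hence "card ({V\<in>F. l \<subseteq> V} - {A}) = card {V\<in>F. l \<subseteq> V} - 1" by simp
        moreover have "card {V\<in>F. l \<subseteq> V} \<le> q + 1" using fib l by blast
        ultimately show "card ({V\<in>F. l \<subseteq> V} - {A}) \<le> q" by linarith
      qed
      hence "(\<Sum>l\<in>Lam. card ({V\<in>F. l \<subseteq> V} - {A})) \<le> (\<Sum>l\<in>Lam. q)"
        by (intro sum_mono) blast
      thus ?thesis by simp
    qed
    also have "\<dots> = Suc (card Lam * q)" by simp
    also have "\<dots> \<le> Suc ((q + 1) * q)" using mult_le_mono1[OF cLam, of q] by simp
    finally have "card F \<le> 1 + q + q^2" by (simp add: power2_eq_square algebra_simps)
    thus ?thesis unfolding q_def by simp
  qed
qed



lemma elem2_card_pow2: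
  fixes U :: "'b set" and pl :: "'b \<Rightarrow> 'b \<Rightarrow> 'b"
  assumes fin: "finite U" and z: "e \<in> U"
    and cl: "\<forall>X\<in>U. \<forall>Y\<in>U. pl X Y \<in> U"
    and asc: "\<forall>X\<in>U. \<forall>Y\<in>U. \<forall>Z\<in>U. pl (pl X Y) Z = pl X (pl Y Z)"
    and cm: "\<forall>X\<in>U. \<forall>Y\<in>U. pl X Y = pl Y X"
    and idl: "\<forall>X\<in>U. pl e X = X"
    and inv: "\<forall>X\<in>U. pl X X = e"
  shows "\<exists>m. card U = 2 ^ m"
proof -
  have asc': "\<And>X Y Z. X \<in> U \<Longrightarrow> Y \<in> U \<Longrightarrow> Z \<in> U \<Longrightarrow> pl (pl X Y) Z = pl X (pl Y Z)"
    using asc by blast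
  have cm': "\<And>X Y. X \<in> U \<Longrightarrow> Y \<in> U \<Longrightarrow> pl X Y = pl Y X" using cm by blast
  have cl': "\<And>X Y. X \<in> U \<Longrightarrow> Y \<in> U \<Longrightarrow> pl X Y \<in> U" using cl by blast
  have idl': "\<And>X. X \<in> U \<Longrightarrow> pl e X = X" using idl by blast
  have inv': "\<And>X. X \<in> U \<Longrightarrow> pl X X = e" using inv by blast
  define sub where "sub H \<longleftrightarrow> H \<subseteq> U \<and> e \<in> H \<and> (\<forall>X\<in>H. \<forall>Y\<in>H. pl X Y \<in> H)" for H
  define K where "K = {k. \<exists>H. sub H \<and> card H = 2 ^ k}"
  have "sub {e}" unfolding sub_def using z idl by auto
  hence K0: "0 \<in> K" unfolding K_def by force
  have Kb: "\<forall>k\<in>K. k \<le> card U"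
  proof
    fix k assume "k \<in> K"
    then obtain H where "sub H" "card H = 2 ^ k" unfolding K_def by blast
    hence "2 ^ k \<le> card U" unfolding sub_def using card_mono[OF fin] by metis
    moreover have "k < 2 ^ k" by (rule less_exp)
    ultimately show "k \<le> card U" by linarith
  qed
  have fK: "finite K" using Kb by (meson finite_atMost finite_subset atMost_iff subsetI)
  define k where "k = Max K"
  have "k \<in> K" unfolding k_def using fK K0 by (intro Max_in) auto
  then obtain H where H: "sub H" "card H = 2 ^ k" unfolding K_def by blast
  have HU: "H \<subseteq> U" "e \<in> H" "\<forall>X\<in>H. \<forall>Y\<in>H. pl X Y \<in> H" using H(1) unfolding sub_def by auto
  show ?thesis
  proof (cases "H = U")
    case True thus ?thesis using H by blast
  next
    case False
    then obtain a where a: "a \<in> U" "a \<notin> H" using HU by blast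
    have canc: "\<And>h. h \<in> U \<Longrightarrow> pl a (pl a h) = h"
    proof -
      fix h assume hU: "h \<in> U"
      have "pl a (pl a h) = pl (pl a a) h" using asc'[OF a(1) a(1) hU] by simp
      also have "\<dots> = h" using inv'[OF a(1)] idl'[OF hU] by simp
      finally show "pl a (pl a h) = h" .
    qed
    define H' where "H' = H \<union> pl a ` H"
    have disj: "H \<inter> pl a ` H = {}"
    proof (rule ccontr)
      assume "H \<inter> pl a ` H \<noteq> {}"
      then obtain h where h: "h \<in> H" "pl a h \<in> H" by blast
      have hU: "h \<in> U" using h HU by blast
      have "pl (pl a h) h = pl a (pl h h)" using asc'[OF a(1) hU hU] .
      also have "\<dots> = a" using inv'[OF hU] cm'[OF a(1) z] idl'[OF a(1)] by simp
      finally have "pl (pl a h) h = a" .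
      moreover have "pl (pl a h) h \<in> H" using HU h by blast
      ultimately show False using a by simp
    qed
    have injH: "inj_on (pl a) H"
    proof (rule inj_onI)
      fix x y assume "x \<in> H" "y \<in> H" "pl a x = pl a y"
      hence "pl a (pl a x) = pl a (pl a y)" by simp
      moreover have "x \<in> U" "y \<in> U" using \<open>x \<in> H\<close> \<open>y \<in> H\<close> HU by auto
      ultimately show "x = y" using canc by simp
    qed
    have cH': "card H' = 2 ^ (k + 1)"
    proof -
      have "card H' = card H + card (pl a ` H)" unfolding H'_def
        using disj finite_subset[OF HU(1) fin] by (intro card_Un_disjoint) simp_all
      also have "\<dots> = 2 * card H" using card_image[OF injH] by simp
      finally show ?thesis using H by simp
    qed
    have paU: "\<And>h. h \<in> H \<Longrightarrow> pl a h \<in> U" using cl a HU by blast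
    have sH': "sub H'"
      unfolding sub_def
    proof (intro conjI ballI)
      show "H' \<subseteq> U" unfolding H'_def using HU paU by blast
      show "e \<in> H'" unfolding H'_def using HU by blast
      fix X Y assume X: "X \<in> H'" and Y: "Y \<in> H'"
      show "pl X Y \<in> H'"
      proof (cases "X \<in> H")
        case XH: True
        show ?thesis
        proof (cases "Y \<in> H")
          case True thus ?thesis using XH HU unfolding H'_def by blast
        next
          case False
          then obtain y where y: "y \<in> H" "Y = pl a y" using Y unfolding H'_def by blast
          have XU: "X \<in> U" and yU: "y \<in> U" using XH y HU by auto
          have "pl X Y = pl a (pl X y)"
          proof -
            have "pl X (pl a y) = pl (pl X a) y" using asc'[OF XU a(1) yU] by simp
            also have "\<dots> = pl (pl a X) y" using cm'[OF XU a(1)] by simp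
            also have "\<dots> = pl a (pl X y)" using asc'[OF a(1) XU yU] .
            finally show ?thesis using y by simp
          qed
          thus ?thesis using XH y HU unfolding H'_def by blast
        qed
      next
        case XnH: False
        then obtain x where x: "x \<in> H" "X = pl a x" using X unfolding H'_def by blast
        show ?thesis
        proof (cases "Y \<in> H")
          case True
          have xU: "x \<in> U" and YU: "Y \<in> U" using x True HU by auto
          have "pl X Y = pl a (pl x Y)" using asc'[OF a(1) xU YU] x by simp
          thus ?thesis using x True HU unfolding H'_def by blast
        next
          case False
          then obtain y where y: "y \<in> H" "Y = pl a y" using Y unfolding H'_def by blast
          have xU: "x \<in> U" and yU: "y \<in> U" using x y HU by auto
          have e1: "pl (pl a x) (pl a y) = pl a (pl x (pl a y))" using asc'[OF a(1) xU cl'[OF a(1) yU]] .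
          have e2: "pl x (pl a y) = pl a (pl x y)"
          proof -
            have "pl x (pl a y) = pl (pl x a) y" using asc'[OF xU a(1) yU] by simp
            also have "\<dots> = pl (pl a x) y" using cm'[OF xU a(1)] by simp
            also have "\<dots> = pl a (pl x y)" using asc'[OF a(1) xU yU] .
            finally show ?thesis .
          qed
          have e3: "pl a (pl a (pl x y)) = pl x y" using canc[OF cl'[OF xU yU]] .
          have "pl X Y = pl x y" using x(2) y(2) e1 e2 e3 by simp
          moreover have "pl x y \<in> H" using HU(3) x(1) y(1) by blast
          ultimately show ?thesis unfolding H'_def by simp
        qed
      qed
    qed
    hence "k + 1 \<in> K" unfolding K_def using cH' by (intro CollectI exI[of _ H'] conjI)
    hence "k + 1 \<le> k" unfolding k_def using Max_ge[OF fK] by blast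
    thus ?thesis by simp
  qed
qed



lemma geo_nat: fixes q :: nat assumes "q \<ge> 1" shows "(q - 1) * (\<Sum>i<m. q^i) + 1 = q^m"
proof (induction m)
  case 0 then show ?case by simp
next
  case (Suc m)
  have "(q - 1) * (\<Sum>i<Suc m. q^i) + 1 = ((q - 1) * (\<Sum>i<m. q^i) + 1) + (q - 1) * q^m"
    by (simp add: algebra_simps)
  also have "\<dots> = q^m + (q - 1) * q^m" using Suc by simp
  also have "\<dots> = q * q^m" using assms by (simp add: algebra_simps diff_mult_distrib)
  finally show ?case by simp
qed

lemma nontriv_facts:
  fixes U :: "('a::{finite,field}^'n::finite) set set"
  assumes lc: "linear_code U" and eq: "equidistant U 2"
  shows "\<forall>X\<in>U - {{0}}. vec.subspace X \<and> vec.dim X = 2"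
    and "\<forall>X\<in>U - {{0}}. \<forall>Y\<in>U - {{0}}. X \<noteq> Y \<longrightarrow> vec.dim (X \<inter> Y) = 1"
proof -
  have sub: "\<forall>X\<in>U. vec.subspace X" and z: "{0} \<in> U" using lc unfolding linear_code_def by auto
  have d2: "\<forall>X\<in>U - {{0}}. vec.subspace X \<and> vec.dim X = 2"
  proof
    fix X assume X: "X \<in> U - {{0}}"
    hence "subspace_dist {0} X = 2" using eq z unfolding equidistant_def by auto
    thus "vec.subspace X \<and> vec.dim X = 2" using dist_zero_left(1)[of X] sub X by auto
  qed
  show "\<forall>X\<in>U - {{0}}. vec.subspace X \<and> vec.dim X = 2" by (rule d2)
  show "\<forall>X\<in>U - {{0}}. \<forall>Y\<in>U - {{0}}. X \<noteq> Y \<longrightarrow> vec.dim (X \<inter> Y) = 1"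
  proof (intro ballI impI)
    fix X Y assume X: "X \<in> U - {{0}}" and Y: "Y \<in> U - {{0}}" and ne: "X \<noteq> Y"
    have "subspace_dist X Y = 2" using eq X Y ne unfolding equidistant_def by auto
    moreover have "vec.dim X = 2" "vec.dim Y = 2" using d2 X Y by auto
    ultimately show "vec.dim (X \<inter> Y) = 1" unfolding subspace_dist_def by simp
  qed
qed

lemma code_bound:
  fixes U :: "('a::{finite,field}^'n::finite) set set"
  assumes lc: "linear_code U" and eq: "equidistant U 2" and n4: "CARD('n) \<ge> 4"
  shows "(\<exists>m. card U = 2 ^ m) \<and> card U \<le> (\<Sum>i<CARD('n) - 1. CARD('a)^i) + 1"
proof
  have "\<exists>pl :: ('a^'n) set \<Rightarrow> ('a^'n) set \<Rightarrow> ('a^'n) set.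
        (\<forall>X\<in>U. \<forall>Y\<in>U. pl X Y \<in> U) \<and>
        (\<forall>X\<in>U. \<forall>Y\<in>U. \<forall>Z\<in>U. pl (pl X Y) Z = pl X (pl Y Z)) \<and>
        (\<forall>X\<in>U. \<forall>Y\<in>U. pl X Y = pl Y X) \<and>
        (\<forall>X\<in>U. pl {0} X = X \<and> pl X {0} = X) \<and>
        (\<forall>X\<in>U. \<exists>Y\<in>U. pl X Y = {0}) \<and>
        (\<forall>X\<in>U. pl X X = {0}) \<and>
        (\<forall>Y1\<in>U. \<forall>Y2\<in>U. \<forall>X\<in>U. subspace_dist (pl Y1 X) (pl Y2 X) = subspace_dist Y1 Y2)"
    using lc unfolding linear_code_def by (elim conjE)
  then obtain pl :: "('a^'n) set \<Rightarrow> ('a^'n) set \<Rightarrow> ('a^'n) set" where pl: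
        "(\<forall>X\<in>U. \<forall>Y\<in>U. pl X Y \<in> U)"
        "(\<forall>X\<in>U. \<forall>Y\<in>U. \<forall>Z\<in>U. pl (pl X Y) Z = pl X (pl Y Z))"
        "(\<forall>X\<in>U. \<forall>Y\<in>U. pl X Y = pl Y X)"
        "(\<forall>X\<in>U. pl {0} X = X \<and> pl X {0} = X)"
        "(\<forall>X\<in>U. \<exists>Y\<in>U. pl X Y = {0})"
        "(\<forall>X\<in>U. pl X X = {0})"
        "(\<forall>Y1\<in>U. \<forall>Y2\<in>U. \<forall>X\<in>U. subspace_dist (pl Y1 X) (pl Y2 X) = subspace_dist Y1 Y2)"
    by (elim exE conjE)
  have z: "{0} \<in> U" using lc unfolding linear_code_def by auto
  show "\<exists>m. card U = 2 ^ m"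
  proof (rule elem2_card_pow2[of U "{0}" pl])
    show "finite U" by simp
    show "{0} \<in> U" by (rule z)
    show "\<forall>X\<in>U. pl {0} X = X" using pl(4) by blast
  qed (fact pl(1), fact pl(2), fact pl(3), fact pl(6))
next
  define q where "q = CARD('a)"
  define n where "n = CARD('n)"
  define N where "N = (\<Sum>i<n - 1. q^i)"
  have q2: "q \<ge> 2" unfolding q_def by (rule q_ge2)
  have n4': "n \<ge> 4" using n4 n_def by simp
  have gN: "(q - 1) * N + 1 = q^(n-1)" unfolding N_def using geo_nat q2 by simp
  have qn: "q^n = q * q^(n-1)" using n4' by (cases n) auto
  have key: "q^n - q = (q^2 - q) * N"
  proof -
    have "q^n = q * ((q - 1) * N) + q" by (simp only: qn gN[symmetric] distrib_left mult_1_right)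
    moreover have "q^2 - q = q * (q - 1)" by (simp add: power2_eq_square diff_mult_distrib2)
    ultimately show ?thesis by (simp add: algebra_simps)
  qed
  define F where "F = U - {{0}}"
  have FP: "\<forall>X\<in>F. vec.subspace X \<and> vec.dim X = 2"
    and FI: "\<forall>X\<in>F. \<forall>Y\<in>F. X \<noteq> Y \<longrightarrow> vec.dim (X \<inter> Y) = 1"
    using nontriv_facts[OF lc eq] unfolding F_def by auto
  have "card F \<le> N"
  proof -
    from planes_bound[OF FP FI]
    consider "card F \<le> 1 + q + q^2" | "card F * (q^2 - q) \<le> q^n - q"
      unfolding q_def n_def by blast
    thus ?thesis
    proof cases
      case 1
      have "(\<Sum>i<3. q^i) \<le> N" unfolding N_def using n4'
        by (intro sum_mono2) auto
      moreover have "(\<Sum>i<3. q^i) = 1 + q + q^2" by (simp add: eval_nat_numeral)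
      ultimately show ?thesis using 1 by simp
    next
      case 2
      hence "card F * (q^2 - q) \<le> N * (q^2 - q)" using key by (simp add: mult.commute)
      moreover have "q^2 - q > 0" using q2 by (simp add: power2_eq_square)
      ultimately show ?thesis by (rule mult_right_le_imp_le)
    qed
  qed
  moreover have "{0} \<in> U" using lc unfolding linear_code_def by auto
  ultimately have "card U \<le> N + 1" unfolding F_def by (simp add: card_Diff_singleton)
  thus "card U \<le> (\<Sum>i<CARD('n) - 1. CARD('a)^i) + 1" unfolding N_def q_def n_def .
qed



lemma construction:
  assumes n2: "CARD('n::finite) \<ge> 2"
    and K: "2 ^ K \<le> (\<Sum>i<CARD('n) - 1. CARD('a::{finite,field})^i) + 1"
  shows "\<exists>U :: ('a^'n) set set. linear_code U \<and> equidistant U 2 \<and> card U = 2 ^ K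
     \<and> (\<exists>W \<in> grass TYPE('a) TYPE('n) 1. U - {{0}} \<subseteq> {V \<in> grass TYPE('a) TYPE('n) 2. W \<subset> V})"
proof -
  define q where "q = CARD('a)"
  define n where "n = CARD('n)"
  define N where "N = (\<Sum>i<n - 1. q^i)"
  have q2: "q \<ge> 2" unfolding q_def by (rule q_ge2)
  have gN: "(q - 1) * N + 1 = q^(n-1)" unfolding N_def using geo_nat q2 by simp
  have n2': "n \<ge> 2" using n2 n_def by simp
  have qn: "q^n = q * q^(n-1)" using n2' by (cases n) auto
  have key: "q^n - q = (q^2 - q) * N"
  proof -
    have "q^n = q * ((q - 1) * N) + q" by (simp only: qn gN[symmetric] distrib_left mult_1_right)
    moreover have "q^2 - q = q * (q - 1)" by (simp add: power2_eq_square diff_mult_distrib2)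
    ultimately show ?thesis by (simp add: algebra_simps)
  qed
  have zd: "vec.dim ({0} :: ('a^'n) set) = 0"
    using dim_zero_iff[of "{0::'a^'n}"] vec.subspace_single_0 by blast
  define w :: "'a^'n" where "w = (\<chi> i. 1)"
  have w0: "w \<noteq> 0" unfolding w_def by (simp add: vec_eq_iff)
  define W where "W = vec.span {w}"
  have sW: "vec.subspace W" unfolding W_def by (rule vec.subspace_span)
  have indw: "vec.independent {w}"
    using vec.independent_insertI[of w "{}"] w0 vec.independent_empty by simp
  have dW: "vec.dim W = 1" unfolding W_def using vec.dim_span_eq_card_independent[OF indw] by simp
  have wW: "w \<in> W" unfolding W_def by (simp add: vec.span_base)
  have cW: "card W = q" using card_dim_k[OF sW dW] q_def by simp
  define Pl where "Pl = {V. vec.subspace V \<and> vec.dim V = 2 \<and> W \<subseteq> V}"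
  have cPl: "\<And>V. V \<in> Pl \<Longrightarrow> card V = q^2" unfolding Pl_def using card_dim_k q_def by blast
  have cover: "UNIV - W \<subseteq> (\<Union>V\<in>Pl. V - W)"
  proof
    fix x assume x: "x \<in> UNIV - W"
    define V where "V = vec.span {x, w}"
    have sV: "vec.subspace V" unfolding V_def by (rule vec.subspace_span)
    have "vec.independent (insert x {w})"
      using vec.independent_insertI[OF _ indw, of x] x unfolding W_def by simp
    moreover have "x \<noteq> w" using x wW by blast
    ultimately have "vec.dim V = 2" unfolding V_def
      using vec.dim_span_eq_card_independent[of "{x, w}"] by simp
    moreover have "W \<subseteq> V" unfolding W_def V_def by (rule vec.span_mono) simp
    moreover have "x \<in> V" unfolding V_def by (simp add: vec.span_base)
    ultimately show "x \<in> (\<Union>V\<in>Pl. V - W)" using sV x unfolding Pl_def by blast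
  qed
  have "q^n - q = card (UNIV - W)"
    using card_Diff_subset[of W UNIV] cW q_def n_def by simp
  also have "\<dots> \<le> card (\<Union>V\<in>Pl. V - W)" by (rule card_mono[OF _ cover]) simp
  also have "\<dots> \<le> (\<Sum>V\<in>Pl. card (V - W))" by (rule card_UN_le) simp
  also have "\<dots> = (\<Sum>V\<in>Pl. q^2 - q)"
  proof (rule sum.cong)
    fix V assume "V \<in> Pl"
    hence "W \<subseteq> V" "card V = q^2" using cPl unfolding Pl_def by auto
    thus "card (V - W) = q^2 - q" using cW by (simp add: card_Diff_subset)
  qed simp
  also have "\<dots> = card Pl * (q^2 - q)" by simp
  finally have "N * (q^2 - q) \<le> card Pl * (q^2 - q)" using key by (simp add: mult.commute)
  moreover have "q^2 - q > 0" using q2 by (simp add: power2_eq_square)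
  ultimately have NPl: "N \<le> card Pl" by (rule mult_right_le_imp_le)
  define I where "I = Pow {..<K} - {{}}"
  have cI: "card I = 2 ^ K - 1" unfolding I_def by (simp add: card_Pow card_Diff_singleton)
  have "card I \<le> card Pl" using cI K NPl unfolding N_def q_def n_def by simp
  then obtain f where f: "f ` I \<subseteq> Pl" "inj_on f I"
    using card_le_inj[of I Pl] unfolding I_def by auto
  define h where "h S = (if S = {} then {0} else f S)" for S
  define U where "U = h ` Pow {..<K}"
  have fne: "\<And>S. S \<in> I \<Longrightarrow> f S \<noteq> {0}"
  proof
    fix S assume "S \<in> I" "f S = {0}"
    hence "vec.dim (f S) = 2" using f unfolding Pl_def by blast
    thus False using \<open>f S = {0}\<close> zd by simp
  qed
  have injh: "inj_on h (Pow {..<K})"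
  proof (rule inj_onI)
    fix S T assume S: "S \<in> Pow {..<K}" and T: "T \<in> Pow {..<K}" and e: "h S = h T"
    show "S = T"
    proof (cases "S = {}"; cases "T = {}")
      assume "S \<noteq> {}" "T \<noteq> {}"
      hence "S \<in> I" "T \<in> I" using S T unfolding I_def by auto
      thus "S = T" using e f(2) \<open>S \<noteq> {}\<close> \<open>T \<noteq> {}\<close> unfolding h_def by (simp add: inj_on_def)
    next
      assume "S = {}" "T \<noteq> {}"
      hence "T \<in> I" using T unfolding I_def by auto
      thus "S = T" using e fne \<open>S = {}\<close> \<open>T \<noteq> {}\<close> unfolding h_def by (metis)
    next
      assume "S \<noteq> {}" "T = {}"
      hence "S \<in> I" using S unfolding I_def by auto
      thus "S = T" using e fne \<open>S \<noteq> {}\<close> \<open>T = {}\<close> unfolding h_def by (metis)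
    qed simp
  qed
  have cU: "card U = 2 ^ K" unfolding U_def using card_image[OF injh] by (simp add: card_Pow)
  have Uel: "\<And>X. X \<in> U \<Longrightarrow> X = {0} \<or> X \<in> Pl"
  proof -
    fix X assume "X \<in> U"
    then obtain S where S: "S \<in> Pow {..<K}" "X = h S" unfolding U_def by blast
    show "X = {0} \<or> X \<in> Pl"
    proof (cases "S = {}")
      case False
      hence "S \<in> I" using S unfolding I_def by auto
      thus ?thesis using S f False unfolding h_def by auto
    qed (simp add: S h_def)
  qed
  have z: "{0} \<in> U" unfolding U_def h_def by (rule image_eqI[of _ _ "{}"]) auto
  have PlI: "\<And>V V'. V \<in> Pl \<Longrightarrow> V' \<in> Pl \<Longrightarrow> V \<noteq> V' \<Longrightarrow> vec.dim (V \<inter> V') = 1"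
  proof -
    fix V V' assume V: "V \<in> Pl" and V': "V' \<in> Pl" and ne: "V \<noteq> V'"
    have s: "vec.subspace V" "vec.dim V = 2" "W \<subseteq> V" "vec.subspace V'" "vec.dim V' = 2" "W \<subseteq> V'"
      using V V' unfolding Pl_def by auto
    have sI: "vec.subspace (V \<inter> V')" using s vec.subspace_inter by blast
    have "V \<inter> V' \<noteq> V"
    proof
      assume "V \<inter> V' = V"
      hence "V \<subseteq> V'" by blast
      hence "V = V'" using sub_eq_dim[OF s(4) s(1)] s by simp
      thus False using ne by simp
    qed
    hence "vec.dim (V \<inter> V') \<le> 1" using proper_sub_plane[OF s(1) sI _ s(2)] by blast
    moreover have "vec.dim W \<le> vec.dim (V \<inter> V')" using s by (intro vec.dim_subset) blast
    ultimately show "vec.dim (V \<inter> V') = 1" using dW by simp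
  qed
  have subU: "\<And>X. X \<in> U \<Longrightarrow> vec.subspace X"
    using Uel vec.subspace_single_0 unfolding Pl_def by blast
  have equi: "equidistant U 2"
    unfolding equidistant_def
  proof (intro ballI impI)
    fix X Y assume X: "X \<in> U" and Y: "Y \<in> U" and ne: "X \<noteq> Y"
    show "subspace_dist X Y = 2"
    proof (cases "X = {0}")
      case True
      hence "Y \<in> Pl" using Uel[OF Y] ne by auto
      thus ?thesis using True dist_zero_left(1)[of Y] unfolding Pl_def by simp
    next
      case XF: False
      hence XP: "X \<in> Pl" using Uel[OF X] by auto
      show ?thesis
      proof (cases "Y = {0}")
        case True
        thus ?thesis using XP dist_zero_left(2)[of X] unfolding Pl_def by simp
      next
        case False
        hence "Y \<in> Pl" using Uel[OF Y] by auto
        thus ?thesis using XP PlI[OF XP _ ne] unfolding subspace_dist_def Pl_def by simp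
      qed
    qed
  qed
  define g where "g = inv_into (Pow {..<K}) h"
  have gP: "\<And>X. X \<in> U \<Longrightarrow> g X \<in> Pow {..<K}" unfolding g_def U_def by (rule inv_into_into)
  have hg: "\<And>X. X \<in> U \<Longrightarrow> h (g X) = X" unfolding g_def U_def by (rule f_inv_into_f)
  have gh: "\<And>S. S \<in> Pow {..<K} \<Longrightarrow> g (h S) = S" unfolding g_def by (rule inv_into_f_f[OF injh])
  have g0: "g {0} = {}" using gh[of "{}"] unfolding h_def by simp
  define sd where "sd A B = (A - B) \<union> (B - A)" for A B :: "nat set"
  define pl where "pl X Y = h (sd (g X) (g Y))" for X Y
  have sdP: "\<And>A B. A \<in> Pow {..<K} \<Longrightarrow> B \<in> Pow {..<K} \<Longrightarrow> sd A B \<in> Pow {..<K}"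
    unfolding sd_def by auto
  have plU: "\<And>X Y. X \<in> U \<Longrightarrow> Y \<in> U \<Longrightarrow> pl X Y \<in> U"
    unfolding pl_def U_def using sdP gP[unfolded U_def] by blast
  have gpl: "\<And>X Y. X \<in> U \<Longrightarrow> Y \<in> U \<Longrightarrow> g (pl X Y) = sd (g X) (g Y)"
    unfolding pl_def using gh sdP gP by blast
  have ginj: "\<And>X Y. X \<in> U \<Longrightarrow> Y \<in> U \<Longrightarrow> g X = g Y \<Longrightarrow> X = Y" using hg by metis
  have lc: "linear_code U"
    unfolding linear_code_def
  proof (intro conjI exI[of _ pl])
    show "U \<subseteq> {X. vec.subspace X}" using subU by blast
    show "{0} \<in> U" by (rule z)
    show "\<forall>X\<in>U. \<forall>Y\<in>U. pl X Y \<in> U" using plU by blast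
    show "\<forall>X\<in>U. \<forall>Y\<in>U. \<forall>Z\<in>U. pl (pl X Y) Z = pl X (pl Y Z)"
    proof (intro ballI)
      fix X Y Z assume "X \<in> U" "Y \<in> U" "Z \<in> U"
      thus "pl (pl X Y) Z = pl X (pl Y Z)"
        using gpl plU unfolding pl_def[of "pl X Y" Z] pl_def[of X "pl Y Z"]
        by (simp add: sd_def Un_Diff Diff_Un Int_Un_distrib Un_assoc Diff_Int Un_commute Un_left_commute,
            intro arg_cong[where f=h]) blast?
    qed
    show "\<forall>X\<in>U. \<forall>Y\<in>U. pl X Y = pl Y X"
      unfolding pl_def sd_def by (simp add: Un_commute)
    show "\<forall>X\<in>U. pl {0} X = X \<and> pl X {0} = X"
      unfolding pl_def sd_def using g0 hg by simp
    show "\<forall>X\<in>U. \<exists>Y\<in>U. pl X Y = {0}"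
      unfolding pl_def sd_def using h_def by auto
    show "\<forall>X\<in>U. pl X X = {0}"
      unfolding pl_def sd_def using h_def by auto
    show "\<forall>Y1\<in>U. \<forall>Y2\<in>U. \<forall>X\<in>U. subspace_dist (pl Y1 X) (pl Y2 X) = subspace_dist Y1 Y2"
    proof (intro ballI)
      fix Y1 Y2 X assume Y1: "Y1 \<in> U" and Y2: "Y2 \<in> U" and X: "X \<in> U"
      show "subspace_dist (pl Y1 X) (pl Y2 X) = subspace_dist Y1 Y2"
      proof (cases "Y1 = Y2")
        case False
        have "g Y1 \<noteq> g Y2" using ginj Y1 Y2 False by blast
        hence "sd (g Y1) (g X) \<noteq> sd (g Y2) (g X)" unfolding sd_def by blast
        hence "pl Y1 X \<noteq> pl Y2 X" using gpl Y1 Y2 X by metis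
        thus ?thesis using equi False Y1 Y2 X plU unfolding equidistant_def by simp
      qed (simp add: subspace_dist_def)
    qed
  qed
  have Wg: "W \<in> grass TYPE('a) TYPE('n) 1" unfolding grass_def using sW dW by simp
  have sun: "U - {{0}} \<subseteq> {V \<in> grass TYPE('a) TYPE('n) 2. W \<subset> V}"
  proof
    fix X assume "X \<in> U - {{0}}"
    hence XP: "X \<in> Pl" using Uel by blast
    hence "W \<noteq> X" using dW unfolding Pl_def by auto
    thus "X \<in> {V \<in> grass TYPE('a) TYPE('n) 2. W \<subset> V}" using XP unfolding Pl_def grass_def by auto
  qed
  show ?thesis using lc equi cU Wg sun by blast
qed



theorem proposition4:
  fixes q n :: nat
  assumes "q = CARD('a::{finite,field})"
    and "n = CARD('n::finite)"
    and "n \<ge> 4"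
  shows "Eq_dist TYPE('a) TYPE('n) 1
           = 2 ^ nat \<lfloor>log 2 ((real q ^ (n - 1) - 1) / (real q - 1) + 1)\<rfloor>
       \<and> Eq_dist TYPE('a) TYPE('n) 1 \<le> Eq_max TYPE('a) TYPE('n)
       \<and> (\<exists>U :: ('a^'n) set set. linear_code U \<and> equidistant U 2
            \<and> card U = Eq_dist TYPE('a) TYPE('n) 1
            \<and> (\<exists>W \<in> grass TYPE('a) TYPE('n) 1.
                 U - {{0}} \<subseteq> {V \<in> grass TYPE('a) TYPE('n) 2. W \<subset> V}))"
proof -
  define N where "N = (\<Sum>i<n - 1. q^i)"
  have q2: "q \<ge> 2" using assms(1) q_ge2 by simp
  have gN: "(q - 1) * N + 1 = q^(n-1)" unfolding N_def using geo_nat q2 by simp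
  have "real ((q - 1) * N + 1) = real (q^(n-1))" using gN by simp
  hence "(real q - 1) * real N + 1 = real q ^ (n - 1)" using q2 by (simp add: of_nat_diff)
  moreover have "real q - 1 > 0" using q2 by simp
  ultimately have rN: "(real q ^ (n - 1) - 1) / (real q - 1) + 1 = real (N + 1)"
    by (simp add: field_simps)
  define k where "k = \<lfloor>log 2 (real (N + 1))\<rfloor>"
  have kb: "2 powr k \<le> real (N + 1) \<and> real (N + 1) < 2 powr (k + 1)"
    using floor_log_eq_powr_iff[of "real (N + 1)" 2 k] k_def by simp
  have k0: "k \<ge> 0" unfolding k_def by simp
  define K where "K = nat k"
  have kK: "real_of_int k = real K" unfolding K_def using k0 by simp
  have "(2::real) ^ K \<le> real (N + 1)" using kb kK by (simp add: powr_realpow)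
  hence K1: "2 ^ K \<le> N + 1" by (metis of_nat_le_iff of_nat_numeral of_nat_power)
  have "real (N + 1) < (2::real) ^ (K + 1)" using kb kK
    by (metis of_int_1 of_int_add of_nat_1 of_nat_add powr_realpow zero_less_numeral)
  hence K2: "N + 1 < 2 ^ (K + 1)" by (metis of_nat_less_iff of_nat_numeral of_nat_power)
  have fexp: "2 ^ nat \<lfloor>log 2 ((real q ^ (n - 1) - 1) / (real q - 1) + 1)\<rfloor> = (2::nat) ^ K"
    unfolding rN K_def k_def ..
  have n2: "CARD('n) \<ge> 2" using assms(2,3) by simp
  obtain U0 :: "('a^'n) set set" where U0: "linear_code U0" "equidistant U0 2" "card U0 = 2 ^ K"
      "\<exists>W \<in> grass TYPE('a) TYPE('n) 1. U0 - {{0}} \<subseteq> {V \<in> grass TYPE('a) TYPE('n) 2. W \<subset> V}"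
    using construction[OF n2, of K] K1 assms(1,2) unfolding N_def by auto
  define C where "C = {card U | U :: ('a^'n) set set. linear_code U \<and> equidistant U (2 * 1)}"
  have fC: "finite C" unfolding C_def by simp
  have inC: "2 ^ K \<in> C" unfolding C_def using U0 by auto
  have ub: "\<forall>c\<in>C. c \<le> 2 ^ K"
  proof
    fix c assume "c \<in> C"
    then obtain U :: "('a^'n) set set" where U: "linear_code U" "equidistant U 2" "c = card U"
      unfolding C_def by auto
    from code_bound[OF U(1,2)] assms obtain m where m: "card U = 2 ^ m" "card U \<le> N + 1"
      unfolding N_def by auto
    have "2 ^ m < (2::nat) ^ (K + 1)" using m K2 by simp
    hence "m < K + 1" using power_strict_increasing_iff[of "2::nat" m "K + 1"] by linarith
    hence "(2::nat) ^ m \<le> 2 ^ K" by (simp add: power_increasing_iff)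
    thus "c \<le> 2 ^ K" using m U by simp
  qed
  have ED: "Eq_dist TYPE('a) TYPE('n) 1 = 2 ^ K"
    unfolding Eq_dist_def C_def[symmetric] using fC inC ub by (intro Max_eqI) auto
  define C' where "C' = {card U | U :: ('a^'n) set set. linear_code U \<and> (\<exists>r. equidistant U r)}"
  have "finite C'" unfolding C'_def by simp
  moreover have "2 ^ K \<in> C'" unfolding C'_def using U0 by auto
  ultimately have "2 ^ K \<le> Eq_max TYPE('a) TYPE('n)" unfolding Eq_max_def C'_def[symmetric] by simp
  thus ?thesis using ED fexp U0 by auto
qed

end
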